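(* For every formula $A$ of $\mathbf{L_1}$, if $\vdash_T A$ then $\vdash_H A$.
   Context: Formulas of $\mathbf{L_1}$: built from atomic formulas $\epsilon ab$ ($a,b$ name variables, possibly equal) with primitive connectives $\vee,\sim$; $\wedge,\supset,\equiv$ defined as usual. $\vdash_H A$: $A$ belongs to the smallest set of formulas containing all instances of classical propositional tautologies and all formulas $\epsilon ab\supset\epsilon aa$, $(\epsilon ab\wedge\epsilon bc)\supset\epsilon ac$, $(\epsilon ab\wedge\epsilon bb)\supset\epsilon ba$, closed under modus ponens. Positive/negative parts (occurrences): $A$ is a positive part of $A$; if $B\vee C$ is a positive part then $B,C$ are positive parts; if $\sim B$ is a positive part then $B$ is a negative part; if $\sim B$ is a negative part then $B$ is a positive part. $F[B_+]$ ($G[B_-]$) denotes a formula with a specified occurrence of $B$ as positive (negative) part; $F[B_+,C_-]$ etc. denote specified non-overlapping occurrences. Tableaux: reduction rules ($\vee_-$) $G[B\vee C_-]$ $\mapsto$ two branches $G[B\vee C_-]\vee\sim B$, $G[B\vee C_-]\vee\sim C$; ($\epsilon_1$) $G[\epsilon ab_-]\mapsto G[\epsilon ab_-]\vee\sim\epsilon aa$; ($\epsilon_2$) $G[\epsilon ab_-,\epsilon bc_-]\mapsto G[\epsilon ab_-,\epsilon bc_-]\vee\sim\epsilon ac$; ($\epsilon_{3b}$) $G[\epsilon ab_-,\epsilon bb_-]\mapsto G[\epsilon ab_-,\epsilon bb_-]\vee\sim\epsilon ba$. A tableau for $A$ is a finite tree with root $A$ whose non-leaf nodes have as children the result of applying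 one rule. A branch is closed if its last formula has the form $F[B_+,B_-]$; a tableau is closed if all its branches are closed. $\vdash_T A$: $A$ has a closed tableau. *)

theory Defs
  imports Main
begin

type_synonym name = nat

datatype fm = Eps name name | Or fm fm | Neg fm

definition And :: "fm \<Rightarrow> fm \<Rightarrow> fm" where "And A B = Neg (Or (Neg A) (Neg B))"
definition Imp :: "fm \<Rightarrow> fm \<Rightarrow> fm" where "Imp A B = Or (Neg A) B"
definition Iff :: "fm \<Rightarrow> fm \<Rightarrow> fm" where "Iff A B = And (Imp A B) (Imp B A)"

datatype pform = PVar nat | POr pform pform | PNeg pform

primrec peval :: "(nat \<Rightarrow> bool) \<Rightarrow> pform \<Rightarrow> bool" where
  "peval v (PVar n) = v n"
| "peval v (POr P Q) = (peval v P \<or> peval v Q)"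
| "peval v (PNeg P) = (\<not> peval v P)"

definition ptaut :: "pform \<Rightarrow> bool" where "ptaut P \<longleftrightarrow> (\<forall>v. peval v P)"

primrec psubst :: "(nat \<Rightarrow> fm) \<Rightarrow> pform \<Rightarrow> fm" where
  "psubst s (PVar n) = s n"
| "psubst s (POr P Q) = Or (psubst s P) (psubst s Q)"
| "psubst s (PNeg P) = Neg (psubst s P)"

definition taut_instance :: "fm \<Rightarrow> bool" where
  "taut_instance A \<longleftrightarrow> (\<exists>P s. ptaut P \<and> A = psubst s P)"

inductive H_prov :: "fm \<Rightarrow> bool" where
  taut: "taut_instance A \<Longrightarrow> H_prov A"
| ax1: "H_prov (Imp (Eps a b) (Eps a a))"
| ax2: "H_prov (Imp (And (Eps a b) (Eps b c)) (Eps a c))"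
| ax3: "H_prov (Imp (And (Eps a b) (Eps b b)) (Eps b a))"
| mp: "H_prov (Imp A B) \<Longrightarrow> H_prov A \<Longrightarrow> H_prov B"

text \<open>part A p B s: the subformula occurrence of A at path p is B, and it is a
  positive part (s = True) or negative part (s = False) of A.\<close>

inductive part :: "fm \<Rightarrow> nat list \<Rightarrow> fm \<Rightarrow> bool \<Rightarrow> bool" where
  root: "part A [] A True"
| or_l: "part A p (Or B C) True \<Longrightarrow> part A (p @ [0]) B True"
| or_r: "part A p (Or B C) True \<Longrightarrow> part A (p @ [1]) C True"
| neg: "part A p (Neg B) s \<Longrightarrow> part A (p @ [0]) B (\<not> s)"

definition non_overlap :: "nat list \<Rightarrow> nat list \<Rightarrow> bool" where
  "non_overlap p q \<longleftrightarrow> (\<nexists>r. q = p @ r) \<and> (\<nexists>r. p = q @ r)"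

inductive rule_app :: "fm \<Rightarrow> fm list \<Rightarrow> bool" where
  or_neg: "part G p (Or B C) False \<Longrightarrow>
     rule_app G [Or G (Neg B), Or G (Neg C)]"
| eps1: "part G p (Eps a b) False \<Longrightarrow> rule_app G [Or G (Neg (Eps a a))]"
| eps2: "part G p (Eps a b) False \<Longrightarrow> part G q (Eps b c) False \<Longrightarrow> non_overlap p q \<Longrightarrow>
     rule_app G [Or G (Neg (Eps a c))]"
| eps3b: "part G p (Eps a b) False \<Longrightarrow> part G q (Eps b b) False \<Longrightarrow> non_overlap p q \<Longrightarrow>
     rule_app G [Or G (Neg (Eps b a))]"

definition closed_fm :: "fm \<Rightarrow> bool" where
  "closed_fm F \<longleftrightarrow> (\<exists>p q B. part F p B True \<and> part F q B False \<and> non_overlap p q)"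

datatype tab = Node fm "tab list"

primrec root_of :: "tab \<Rightarrow> fm" where "root_of (Node A ts) = A"

inductive is_tableau :: "tab \<Rightarrow> bool" where
  leaf: "is_tableau (Node A [])"
| step: "rule_app A (map root_of ts) \<Longrightarrow> (\<forall>t\<in>set ts. is_tableau t) \<Longrightarrow> is_tableau (Node A ts)"

inductive all_closed :: "tab \<Rightarrow> bool" where
  leaf: "closed_fm A \<Longrightarrow> all_closed (Node A [])"
| inner: "ts \<noteq> [] \<Longrightarrow> (\<forall>t\<in>set ts. all_closed t) \<Longrightarrow> all_closed (Node A ts)"

definition T_prov :: "fm \<Rightarrow> bool" where
  "T_prov A \<longleftrightarrow> (\<exists>t. is_tableau t \<and> root_of t = A \<and> all_closed t)"

end

theory Submission
  imports Defs "HOL-Library.Nat_Bijection"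
begin

primrec ev :: "(name \<Rightarrow> name \<Rightarrow> bool) \<Rightarrow> fm \<Rightarrow> bool" where
  "ev w (Eps a b) = w a b"
| "ev w (Or A B) = (ev w A \<or> ev w B)"
| "ev w (Neg A) = (\<not> ev w A)"

primrec enc :: "fm \<Rightarrow> pform" where
  "enc (Eps a b) = PVar (prod_encode (a,b))"
| "enc (Or A B) = POr (enc A) (enc B)"
| "enc (Neg A) = PNeg (enc A)"

definition dec :: "nat \<Rightarrow> fm" where
  "dec n = (case prod_decode n of (a,b) \<Rightarrow> Eps a b)"

lemma psubst_enc: "psubst dec (enc F) = F"
  by (induction F) (auto simp: dec_def)

lemma peval_enc: "peval v (enc F) = ev (\<lambda>a b. v (prod_encode (a,b))) F"
  by (induction F) auto

lemma taut_H: assumes "\<forall>w. ev w F" shows "H_prov F"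
proof -
  have "ptaut (enc F)" using assms by (simp add: ptaut_def peval_enc)
  then have "taut_instance F" unfolding taut_instance_def using psubst_enc by metis
  then show ?thesis by (rule H_prov.taut)
qed

lemma part_sem: "part F p B s \<Longrightarrow> (if s then ev w B \<longrightarrow> ev w F else \<not> ev w B \<longrightarrow> ev w F)"
  by (induction rule: part.induct) auto

lemma pos: "part F p B True \<Longrightarrow> ev w B \<Longrightarrow> ev w F"
  using part_sem[of F p B True w] by simp

lemma negp: "part F p B False \<Longrightarrow> \<not> ev w B \<Longrightarrow> ev w F"
  using part_sem[of F p B False w] by simp

lemma mp2: "H_prov (Imp X (Imp Y G)) \<Longrightarrow> H_prov X \<Longrightarrow> H_prov Y \<Longrightarrow> H_prov G"
  by (meson H_prov.mp)

lemma closed_H: "closed_fm F \<Longrightarrow> H_prov F"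
  unfolding closed_fm_def
  by (metis taut_H pos negp)

lemma rule_H: "rule_app G Gs \<Longrightarrow> \<forall>X\<in>set Gs. H_prov X \<Longrightarrow> H_prov G"
proof (induction rule: rule_app.induct)
  case (or_neg G p B C)
  have t: "H_prov (Imp (Or G (Neg B)) (Imp (Or G (Neg C)) G))"
    by (rule taut_H) (use or_neg negp[OF or_neg(1)] in \<open>auto simp: Imp_def\<close>)
  show ?case using mp2[OF t] or_neg by auto
next
  case (eps1 G p a b)
  have t: "H_prov (Imp (Imp (Eps a b) (Eps a a)) (Imp (Or G (Neg (Eps a a))) G))"
    by (rule taut_H) (use negp[OF eps1(1)] in \<open>auto simp: Imp_def\<close>)
  show ?case using mp2[OF t] eps1 H_prov.ax1 by auto
next
  case (eps2 G p a b q c)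
  have t: "H_prov (Imp (Imp (And (Eps a b) (Eps b c)) (Eps a c)) (Imp (Or G (Neg (Eps a c))) G))"
    by (rule taut_H) (use negp[OF eps2(1)] negp[OF eps2(2)] in \<open>auto simp: Imp_def And_def\<close>)
  show ?case using mp2[OF t] eps2 H_prov.ax2 by auto
next
  case (eps3b G p a b q)
  have t: "H_prov (Imp (Imp (And (Eps a b) (Eps b b)) (Eps b a)) (Imp (Or G (Neg (Eps b a))) G))"
    by (rule taut_H) (use negp[OF eps3b(1)] negp[OF eps3b(2)] in \<open>auto simp: Imp_def And_def\<close>)
  show ?case using mp2[OF t] eps3b H_prov.ax3 by auto
qed

lemma tab_H: "all_closed t \<Longrightarrow> is_tableau t \<Longrightarrow> H_prov (root_of t)"
proof (induction rule: all_closed.induct)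
  case (leaf A)
  then show ?case by (simp add: closed_H)
next
  case (inner ts A)
  from inner.prems inner.hyps(1) have r: "rule_app A (map root_of ts)" and tt: "\<forall>t\<in>set ts. is_tableau t"
    by (auto elim: is_tableau.cases)
  have "\<forall>X\<in>set (map root_of ts). H_prov X" using inner.IH tt by auto
  then show ?case using rule_H[OF r] by simp
qed

theorem theorem2p2:
  fixes A :: fm
  assumes "T_prov A"
  shows "H_prov A"
  using assms tab_H unfolding T_prov_def by blast

end
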